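(* Assume $\rho\in(\frac14,\frac12)$. Then, as $h\to0_+$, \[ \lambda_1(\mathcal H_h)=-1-h^{1/2}-\frac12h+o(h). \]
   Context: For $h\in(0,1)$ with $h^{\frac12-\rho}<\frac13$, let $\delta=h^{\rho-\frac12}$. $\mathcal H_h$ is the self-adjoint operator in the weighted space $L^2((0,\delta);(1-h^{1/2}\tau)d\tau)$ associated with the closed quadratic form \[ q_h(u)=\int_0^\delta|u'(\tau)|^2(1-h^{1/2}\tau)\,d\tau-|u(0)|^2 \] on $\{u\in H^1((0,\delta)):u(\delta)=0\}$; it acts as $-\frac{d^2}{d\tau^2}+\frac{h^{1/2}}{1-h^{1/2}\tau}\frac{d}{d\tau}$ with domain $\{u\in H^2((0,\delta)):u'(0)=-u(0),\ u(\delta)=0\}$. $\lambda_1(\mathcal H_h)$ is its lowest eigenvalue. *)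

theory Defs
  imports "HOL-Analysis.Analysis" "HOL-Library.Landau_Symbols"
begin

text \<open>delta = h^(rho - 1/2), the length of the interval.\<close>
definition delta_h :: "real \<Rightarrow> real \<Rightarrow> real" where
  "delta_h h \<rho> = h powr (\<rho> - 1/2)"

text \<open>lam is an eigenvalue of H_h: there is a nonzero u, twice differentiable on
  [0, delta] (an H^2 function; eigenfunctions are smooth up to the boundary since the
  coefficients are smooth there), with
  -u'' + h^(1/2)/(1 - h^(1/2) t) u' = lam u on [0,delta], u'(0) = -u(0), u(delta) = 0.\<close>
definition is_eigenvalue_H :: "real \<Rightarrow> real \<Rightarrow> real \<Rightarrow> bool" where
  "is_eigenvalue_H h \<rho> lam \<longleftrightarrow>
     (let \<delta> = delta_h h \<rho> in
      \<exists>u u' u'' :: real \<Rightarrow> real.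
        (\<forall>t\<in>{0..\<delta>}. (u has_real_derivative u' t) (at t within {0..\<delta>}) \<and>
                         (u' has_real_derivative u'' t) (at t within {0..\<delta>})) \<and>
        (\<forall>t\<in>{0..\<delta>}. - u'' t + sqrt h / (1 - sqrt h * t) * u' t = lam * u t) \<and>
        u' 0 = - u 0 \<and> u \<delta> = 0 \<and>
        (\<exists>t\<in>{0..\<delta>}. u t \<noteq> 0))"

definition lambda1_H :: "real \<Rightarrow> real \<Rightarrow> real" where
  "lambda1_H h \<rho> = Inf {lam. is_eigenvalue_H h \<rho> lam}"

end

theory Submission
  imports Defs "HOL-Real_Asymp.Real_Asymp"
begin

fun Aco :: "real \<Rightarrow> real \<Rightarrow> real \<Rightarrow> real \<Rightarrow> nat \<Rightarrow> real" where
  "Aco c l a0 a1 0 = a0"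
| "Aco c l a0 a1 (Suc 0) = a1"
| "Aco c l a0 a1 (Suc (Suc 0)) = (c*a1 - l*a0)/2"
| "Aco c l a0 a1 (Suc (Suc (Suc n))) = (c*(real n+2)^2 * Aco c l a0 a1 (Suc (Suc n)) - l * Aco c l a0 a1 (Suc n) + l*c*Aco c l a0 a1 n) / ((real n+3)*(real n+2))"

lemma nat3_induct:
  assumes "P 0" "P 1" "P 2" "\<And>n. P n \<Longrightarrow> P (Suc n) \<Longrightarrow> P (Suc (Suc n)) \<Longrightarrow> P (Suc (Suc (Suc n)))"
  shows "P n"
proof (induction n rule: less_induct)
  case (less n)
  show ?case
  proof (cases n)
    case 0 then show ?thesis using assms by simp
  next
    case (Suc m) note m = this
    show ?thesis
    proof (cases m)
      case 0 then show ?thesis using assms m by simp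
    next
      case (Suc k) note k = this
      show ?thesis
      proof (cases k)
        case 0 then show ?thesis using assms m k by (simp add: numeral_2_eq_2)
      next
        case (Suc j)
        then show ?thesis using assms(4)[of j] less m k by simp
      qed
    qed
  qed
qed

lemma Aco_step_bound:
  fixes n :: nat
  assumes c0: "0 \<le> c" and cq: "c \<le> q" and q0: "0 < q" and lL: "\<bar>l\<bar> \<le> L" and K0: "0 \<le> K"
    and E0: "0 \<le> E"
    and I0: "\<bar>x0\<bar> \<le> K * q^n * E" and I1: "\<bar>x1\<bar> \<le> K * q^(n+1) * E" and I2: "\<bar>x2\<bar> \<le> K * q^(n+2) * E"
  shows "\<bar>(c*(real n+2)^2 * x2 - l * x1 + l*c*x0) / ((real n+3)*(real n+2))\<bar>
      \<le> K * q^(n+3) * E * (1 + 2*(L/q^2)/((real n+2)*(real n+3)))"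
proof -
  have L0: "0 \<le> L" using lL by linarith
  have d: "0 < (real n+3)*(real n+2)" by simp
  have "\<bar>c*(real n+2)^2 * x2 - l * x1 + l*c*x0\<bar> \<le> c*(real n+2)^2 * \<bar>x2\<bar> + \<bar>l\<bar> * \<bar>x1\<bar> + \<bar>l\<bar>*c*\<bar>x0\<bar>"
  proof -
    have "\<bar>c*(real n+2)^2 * x2\<bar> = c*(real n+2)^2 * \<bar>x2\<bar>" using c0 by (simp add: abs_mult)
    moreover have "\<bar>l * x1\<bar> = \<bar>l\<bar> * \<bar>x1\<bar>" by (simp add: abs_mult)
    moreover have "\<bar>l*c*x0\<bar> = \<bar>l\<bar>*c*\<bar>x0\<bar>" using c0 by (simp add: abs_mult)
    ultimately show ?thesis by linarith
  qed
  also have "\<dots> \<le> q*(real n+2)^2 * (K * q^(n+2) * E) + L * (K * q^(n+1) * E) + L*q*(K * q^n * E)"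
  proof -
    have a: "c*(real n+2)^2 * \<bar>x2\<bar> \<le> q*(real n+2)^2 * (K * q^(n+2) * E)"
      by (rule mult_mono) (use cq c0 I2 in auto)
    have b: "\<bar>l\<bar> * \<bar>x1\<bar> \<le> L * (K * q^(n+1) * E)"
      by (rule mult_mono) (use lL L0 I1 in auto)
    have cc: "\<bar>l\<bar>*c*\<bar>x0\<bar> \<le> L*q*(K * q^n * E)"
      by (rule mult_mono) (use lL L0 I0 cq c0 q0 in \<open>auto intro: mult_mono\<close>)
    show ?thesis using a b cc by linarith
  qed
  also have "\<dots> = K * q^(n+3) * E * ((real n+2)^2 + 2*(L/q^2))"
    using q0 by (simp add: field_simps power_add numeral_3_eq_3 numeral_2_eq_2)
  finally have N: "\<bar>c*(real n+2)^2 * x2 - l * x1 + l*c*x0\<bar> \<le> K * q^(n+3) * E * ((real n+2)^2 + 2*(L/q^2))" .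
  have "(real n+2)^2 + 2*(L/q^2) \<le> (1 + 2*(L/q^2)/((real n+2)*(real n+3))) * ((real n+3)*(real n+2))"
  proof -
    have "(1 + 2*(L/q^2)/((real n+2)*(real n+3))) * ((real n+3)*(real n+2)) = (real n+3)*(real n+2) + 2*(L/q^2)"
    proof -
      have nz: "(real n+2)*(real n+3) \<noteq> 0" by simp
      have g: "\<And>m x::real. m \<noteq> 0 \<Longrightarrow> (1 + x/m)*m = m + x" by (simp add: field_simps)
      show ?thesis using g[OF nz, of "2*(L/q^2)"] by (simp add: mult.commute)
    qed
    moreover have "(real n+2)^2 \<le> (real n+3)*(real n+2)" by (simp add: power2_eq_square)
    ultimately show ?thesis by linarith
  qed
  then have "K * q^(n+3) * E * ((real n+2)^2 + 2*(L/q^2)) \<le> K * q^(n+3) * E * ((1 + 2*(L/q^2)/((real n+2)*(real n+3))) * ((real n+3)*(real n+2)))"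
    by (intro mult_left_mono) (use K0 E0 q0 in auto)
  with N have "\<bar>c*(real n+2)^2 * x2 - l * x1 + l*c*x0\<bar> \<le> K * q^(n+3) * E * (1 + 2*(L/q^2)/((real n+2)*(real n+3))) * ((real n+3)*(real n+2))"
    by (simp add: mult.assoc)
  then show ?thesis using d by (simp add: abs_divide pos_divide_le_eq)
qed

lemma Aco_bound:
  assumes c0: "0 \<le> c" and cq: "c \<le> q" and q0: "0 < q" and lL: "\<bar>l\<bar> \<le> L"
    and a0: "\<bar>a0\<bar> \<le> K" and a1: "\<bar>a1\<bar> \<le> K * q"
  shows "\<bar>Aco c l a0 a1 n\<bar> \<le> K * q^n * exp (4*L/q^2 - 4*L/q^2/(real n+1))"
proof -
  define \<gamma> where "\<gamma> = 4*L/q^2"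
  have L0: "0 \<le> L" using lL by linarith
  have K0: "0 \<le> K" using a0 by linarith
  have g0: "0 \<le> \<gamma>" unfolding \<gamma>_def using L0 q0 by simp
  have mono: "\<And>m k::nat. m \<le> k \<Longrightarrow> exp (\<gamma> - \<gamma>/(real m+1)) \<le> exp (\<gamma> - \<gamma>/(real k+1))"
  proof -
    fix m k :: nat assume "m \<le> k"
    then have "\<gamma>/(real k+1) \<le> \<gamma>/(real m+1)" using g0 by (intro divide_left_mono) auto
    then show "exp (\<gamma> - \<gamma>/(real m+1)) \<le> exp (\<gamma> - \<gamma>/(real k+1))" by simp
  qed
  have "\<bar>Aco c l a0 a1 n\<bar> \<le> K * q^n * exp (\<gamma> - \<gamma>/(real n+1))"
  proof (induction n rule: nat3_induct)
    case 1 then show ?case using a0 by simp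
  next
    case 2
    have "1 \<le> exp (\<gamma> - \<gamma>/2)" using g0 by simp
    then have "K * q * 1 \<le> K * q * exp (\<gamma> - \<gamma>/2)" using K0 q0 by (intro mult_left_mono) auto
    then show ?case using a1 by simp
  next
    case 3
    have "\<bar>c*a1 - l*a0\<bar> \<le> q*(K*q) + L*K"
    proof -
      have "\<bar>c*a1\<bar> \<le> q*(K*q)" unfolding abs_mult by (rule mult_mono) (use c0 cq a1 in auto)
      moreover have "\<bar>l*a0\<bar> \<le> L*K" unfolding abs_mult by (rule mult_mono) (use lL a0 L0 in auto)
      ultimately show ?thesis by (simp add: abs_triangle_ineq4 order_trans[OF abs_triangle_ineq4])
    qed
    also have "\<dots> = K*q^2*(1 + L/q^2)" using q0 by (simp add: field_simps power2_eq_square)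
    also have "\<dots> \<le> K*q^2*exp (L/q^2)"
      by (intro mult_left_mono) (use K0 q0 exp_ge_add_one_self in auto)
    also have "\<dots> \<le> K*q^2*exp (\<gamma> - \<gamma>/3)"
    proof (intro mult_left_mono)
      have "0 \<le> L/q^2" using L0 by simp
      moreover have "\<gamma> - \<gamma>/3 = (8/3)*(L/q^2)" unfolding \<gamma>_def by simp
      ultimately show "exp (L/q^2) \<le> exp (\<gamma> - \<gamma>/3)" by simp
    qed (use K0 in auto)
    finally have "\<bar>c*a1 - l*a0\<bar> \<le> K*q^2*exp (\<gamma> - \<gamma>/3)" .
    moreover have "0 \<le> K*q^2*exp (\<gamma> - \<gamma>/3)" using K0 by simp
    ultimately show ?case by (simp add: numeral_2_eq_2 abs_divide)
  next
    case (4 n)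
    define E where "E = exp (\<gamma> - \<gamma>/(real n+3))"
    have EE: "E = exp (\<gamma> - \<gamma>/(real (n+2)+1))" unfolding E_def by (simp add: add.commute add.left_commute)
    have I0: "\<bar>Aco c l a0 a1 n\<bar> \<le> K * q^n * E"
    proof -
      have "K * q^n * exp (\<gamma> - \<gamma>/(real n+1)) \<le> K * q^n * E"
        unfolding EE by (intro mult_left_mono mono) (use K0 q0 in auto)
      then show ?thesis using 4(1) by linarith
    qed
    have I1: "\<bar>Aco c l a0 a1 (Suc n)\<bar> \<le> K * q^(n+1) * E"
    proof -
      have "K * q^(n+1) * exp (\<gamma> - \<gamma>/(real (Suc n)+1)) \<le> K * q^(n+1) * E"
        unfolding EE by (intro mult_left_mono mono) (use K0 q0 in auto)
      then show ?thesis using 4(2) by simp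
    qed
    have I2: "\<bar>Aco c l a0 a1 (Suc (Suc n))\<bar> \<le> K * q^(n+2) * E"
      using 4(3) unfolding E_def by (simp add: add.commute add.left_commute)
    have E0: "0 \<le> E" unfolding E_def by simp
    have st: "\<bar>Aco c l a0 a1 (Suc (Suc (Suc n)))\<bar> \<le> K * q^(n+3) * E * (1 + 2*(L/q^2)/((real n+2)*(real n+3)))"
      unfolding Aco.simps by (rule Aco_step_bound[OF c0 cq q0 lL K0 E0 I0 I1 I2])
    have x1: "2*(L/q^2)/((real n+2)*(real n+3)) \<le> \<gamma>/((real n+3)*(real n+4))"
    proof -
      have "2*(L/q^2)/((real n+2)*(real n+3)) = (L/q^2) * (2/((real n+2)*(real n+3)))" by simp
      also have "\<dots> \<le> (L/q^2) * (4/((real n+3)*(real n+4)))"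
      proof (intro mult_left_mono)
        have p1: "0 < (real n+2)*(real n+3)" and p2: "0 < (real n+3)*(real n+4)" by auto
        have "2*((real n+3)*(real n+4)) \<le> 4*((real n+2)*(real n+3))" by (simp add: algebra_simps)
        then show "2/((real n+2)*(real n+3)) \<le> 4/((real n+3)*(real n+4))"
          using p1 p2 by (simp add: divide_simps)
      qed (use L0 q0 in auto)
      also have "\<dots> = \<gamma>/((real n+3)*(real n+4))" unfolding \<gamma>_def by simp
      finally show ?thesis .
    qed
    have "1 + 2*(L/q^2)/((real n+2)*(real n+3)) \<le> exp (\<gamma>/((real n+3)*(real n+4)))"
      using exp_ge_add_one_self[of "2*(L/q^2)/((real n+2)*(real n+3))"] x1 by (meson add_le_cancel_left order_trans exp_le_cancel_iff)
    then have "E * (1 + 2*(L/q^2)/((real n+2)*(real n+3))) \<le> E * exp (\<gamma>/((real n+3)*(real n+4)))"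
      using E0 by (simp add: mult_left_mono)
    also have "\<dots> = exp (\<gamma> - \<gamma>/(real (Suc (Suc (Suc n)))+1))"
    proof -
      have "\<gamma> - \<gamma>/(real n+3) + \<gamma>/((real n+3)*(real n+4)) = \<gamma> - \<gamma>/(real n+4)"
      proof -
        have a: "real n + 3 \<noteq> 0" "real n + 4 \<noteq> 0" by auto
        have "\<gamma>/(real n+3) - \<gamma>/((real n+3)*(real n+4)) = \<gamma>/(real n+4)"
          using a by (simp add: divide_simps) (simp add: algebra_simps)
        then show ?thesis by linarith
      qed
      then show ?thesis unfolding E_def by (simp add: exp_add[symmetric] add.commute add.left_commute)
    qed
    finally have "E * (1 + 2*(L/q^2)/((real n+2)*(real n+3))) \<le> exp (\<gamma> - \<gamma>/(real (Suc (Suc (Suc n)))+1))" .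
    then have "K * q^(n+3) * (E * (1 + 2*(L/q^2)/((real n+2)*(real n+3)))) \<le> K * q^(n+3) * exp (\<gamma> - \<gamma>/(real (Suc (Suc (Suc n)))+1))"
      by (intro mult_left_mono) (use K0 q0 in auto)
    with st show ?case by (simp add: mult.assoc numeral_3_eq_3)
  qed
  then show ?thesis unfolding \<gamma>_def .
qed

definition U :: "real \<Rightarrow> real \<Rightarrow> real \<Rightarrow> real \<Rightarrow> real \<Rightarrow> real" where
  "U c l a0 a1 t = (\<Sum>n. Aco c l a0 a1 n * t^n)"
definition U1 :: "real \<Rightarrow> real \<Rightarrow> real \<Rightarrow> real \<Rightarrow> real \<Rightarrow> real" where
  "U1 c l a0 a1 t = (\<Sum>n. diffs (Aco c l a0 a1) n * t^n)"
definition U2 :: "real \<Rightarrow> real \<Rightarrow> real \<Rightarrow> real \<Rightarrow> real \<Rightarrow> real" where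
  "U2 c l a0 a1 t = (\<Sum>n. diffs (diffs (Aco c l a0 a1)) n * t^n)"

lemma Aco_uniform:
  assumes c0: "0 \<le> c" and cq: "c \<le> q" and q0: "0 < q" and lL: "\<bar>l\<bar> \<le> L"
  shows "\<bar>Aco c l a0 a1 n\<bar> \<le> max \<bar>a0\<bar> (\<bar>a1\<bar>/q) * exp (4*L/q^2) * q^n"
proof -
  define K where "K = max \<bar>a0\<bar> (\<bar>a1\<bar>/q)"
  have a0: "\<bar>a0\<bar> \<le> K" unfolding K_def by simp
  have a1: "\<bar>a1\<bar> \<le> K * q"
  proof -
    have "\<bar>a1\<bar>/q \<le> K" unfolding K_def by simp
    then show ?thesis using q0 by (simp add: divide_le_eq)
  qed
  have K0: "0 \<le> K" using a0 by linarith
  have L0: "0 \<le> L" using lL by linarith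
  have "\<bar>Aco c l a0 a1 n\<bar> \<le> K * q^n * exp (4*L/q^2 - 4*L/q^2/(real n+1))"
    by (rule Aco_bound[OF c0 cq q0 lL a0 a1])
  also have "\<dots> \<le> K * q^n * exp (4*L/q^2)"
    by (intro mult_left_mono) (use K0 q0 L0 in auto)
  finally show ?thesis unfolding K_def by (simp add: mult_ac)
qed

lemma Aco_summable:
  assumes c0: "0 \<le> c" and cq: "c \<le> q" and q0: "0 < q" and t: "\<bar>t\<bar> < 1/q"
  shows "summable (\<lambda>n. Aco c l a0 a1 n * t^n)"
proof -
  define M where "M = max \<bar>a0\<bar> (\<bar>a1\<bar>/q) * exp (4*\<bar>l\<bar>/q^2)"
  have M0: "0 \<le> M" unfolding M_def by simp
  have qt: "q * \<bar>t\<bar> < 1" using t q0 by (simp add: field_simps)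
  show ?thesis
  proof (rule summable_comparison_test)
    show "\<exists>N. \<forall>n\<ge>N. norm (Aco c l a0 a1 n * t^n) \<le> M * (q*\<bar>t\<bar>)^n"
    proof (intro exI allI impI)
      fix n :: nat
      have "\<bar>Aco c l a0 a1 n\<bar> \<le> M * q^n" using Aco_uniform[OF c0 cq q0, of l "\<bar>l\<bar>" a0 a1 n] unfolding M_def by simp
      then have "\<bar>Aco c l a0 a1 n\<bar> * \<bar>t\<bar>^n \<le> M * q^n * \<bar>t\<bar>^n" by (simp add: mult_right_mono)
      then show "norm (Aco c l a0 a1 n * t^n) \<le> M * (q*\<bar>t\<bar>)^n"
        by (simp add: abs_mult power_abs power_mult_distrib mult_ac)
    qed
    show "summable (\<lambda>n. M * (q*\<bar>t\<bar>)^n)"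
      using qt q0 by (intro summable_mult summable_geometric) auto
  qed
qed

lemma U_derivs:
  assumes c0: "0 \<le> c" and cq: "c \<le> q" and q0: "0 < q" and t: "\<bar>t\<bar> < 1/q"
  shows "(U c l a0 a1 has_real_derivative U1 c l a0 a1 t) (at t)"
    and "(U1 c l a0 a1 has_real_derivative U2 c l a0 a1 t) (at t)"
    and "summable (\<lambda>n. diffs (Aco c l a0 a1) n * t^n)"
    and "summable (\<lambda>n. diffs (diffs (Aco c l a0 a1)) n * t^n)"
proof -
  have s0: "\<And>z. norm z < 1/q \<Longrightarrow> summable (\<lambda>n. Aco c l a0 a1 n * z^n)"
    using Aco_summable[OF c0 cq q0] by simp
  have s1: "\<And>z. norm z < 1/q \<Longrightarrow> summable (\<lambda>n. diffs (Aco c l a0 a1) n * z^n)"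
    using termdiff_converges s0 by blast
  have s2: "\<And>z. norm z < 1/q \<Longrightarrow> summable (\<lambda>n. diffs (diffs (Aco c l a0 a1)) n * z^n)"
    using termdiff_converges s1 by blast
  show "(U c l a0 a1 has_real_derivative U1 c l a0 a1 t) (at t)"
    unfolding U_def[abs_def] U1_def using termdiffs_strong'[of "1/q" "Aco c l a0 a1" t] s0 t by simp
  show "(U1 c l a0 a1 has_real_derivative U2 c l a0 a1 t) (at t)"
    unfolding U1_def[abs_def] U2_def using termdiffs_strong'[of "1/q" "diffs (Aco c l a0 a1)" t] s1 t by simp
  show "summable (\<lambda>n. diffs (Aco c l a0 a1) n * t^n)" using s1 t by simp
  show "summable (\<lambda>n. diffs (diffs (Aco c l a0 a1)) n * t^n)" using s2 t by simp
qed

lemma U_ode: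
  assumes c0: "0 \<le> c" and cq: "c \<le> q" and q0: "0 < q" and t: "\<bar>t\<bar> < 1/q"
  shows "(1 - c*t) * U2 c l a0 a1 t - c * U1 c l a0 a1 t + l * (1 - c*t) * U c l a0 a1 t = 0"
proof -
  define A where "A = Aco c l a0 a1"
  have s0: "(\<lambda>n. A n * t^n) sums U c l a0 a1 t"
    unfolding A_def U_def using Aco_summable[OF c0 cq q0 t] by (simp add: summable_sums)
  have s1: "(\<lambda>n. diffs A n * t^n) sums U1 c l a0 a1 t"
    unfolding A_def U1_def using U_derivs(3)[OF c0 cq q0 t] by (simp add: summable_sums)
  have s2: "(\<lambda>n. diffs (diffs A) n * t^n) sums U2 c l a0 a1 t"
    unfolding A_def U2_def using U_derivs(4)[OF c0 cq q0 t] by (simp add: summable_sums)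
  define Lc where "Lc n = diffs (diffs A) n - c * diffs A n + l * A n" for n
  define Rc where "Rc n = c * diffs (diffs A) n + l*c*A n" for n
  have sL: "(\<lambda>n. Lc n * t^n) sums (U2 c l a0 a1 t - c * U1 c l a0 a1 t + l * U c l a0 a1 t)"
  proof -
    have "(\<lambda>n. diffs (diffs A) n * t^n - c * (diffs A n * t^n) + l * (A n * t^n)) sums (U2 c l a0 a1 t - c * U1 c l a0 a1 t + l * U c l a0 a1 t)"
      by (intro sums_add sums_diff sums_mult s0 s1 s2)
    then show ?thesis unfolding Lc_def by (simp add: algebra_simps)
  qed
  have sR: "(\<lambda>n. Rc n * t^n) sums (c * U2 c l a0 a1 t + l*c* U c l a0 a1 t)"
  proof -
    have "(\<lambda>n. c * (diffs (diffs A) n * t^n) + (l*c) * (A n * t^n)) sums (c * U2 c l a0 a1 t + l*c* U c l a0 a1 t)"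
      by (intro sums_add sums_mult s0 s2)
    then show ?thesis unfolding Rc_def by (simp add: algebra_simps)
  qed
  have L0: "Lc 0 = 0" unfolding Lc_def A_def by (simp add: diffs_def numeral_2_eq_2 field_simps)
  have LS: "Lc (Suc n) = Rc n" for n
  proof -
    have nz: "(real n+3)*(real n+2) \<noteq> 0" by auto
    have e: "A (Suc (Suc (Suc n))) * ((real n+3)*(real n+2)) = c*(real n+2)^2 * A (Suc (Suc n)) - l * A (Suc n) + l*c*A n"
      unfolding A_def Aco.simps using nz by simp
    show ?thesis unfolding Lc_def Rc_def diffs_def
      using e by (simp add: algebra_simps power2_eq_square)
  qed
  have "(\<lambda>n. Lc (Suc n) * t^(Suc n)) sums (U2 c l a0 a1 t - c * U1 c l a0 a1 t + l * U c l a0 a1 t)"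
    using sL L0 by (subst sums_Suc_iff) simp
  moreover have "(\<lambda>n. Lc (Suc n) * t^(Suc n)) sums (t * (c * U2 c l a0 a1 t + l*c* U c l a0 a1 t))"
    using sums_mult[OF sR, of t] by (simp add: LS mult_ac)
  ultimately have "U2 c l a0 a1 t - c * U1 c l a0 a1 t + l * U c l a0 a1 t = t * (c * U2 c l a0 a1 t + l*c* U c l a0 a1 t)"
    using sums_unique2 by blast
  then show ?thesis by (simp add: algebra_simps)
qed

lemma U_init: "U c l a0 a1 0 = a0" "U1 c l a0 a1 0 = a1"
  unfolding U_def U1_def using powser_zero[of "Aco c l a0 a1"] powser_zero[of "diffs (Aco c l a0 a1)"]
  by (simp_all add: diffs_def)

lemma Aco_cont: "continuous_on UNIV (\<lambda>l. Aco c l a0 a1 n)"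
proof (induction n rule: nat3_induct)
  case (4 n)
  then show ?case unfolding Aco.simps by (intro continuous_intros) auto
qed (auto intro!: continuous_intros simp: numeral_2_eq_2)

lemma U_joint_cont:
  assumes c0: "0 \<le> c" and cq: "c \<le> q" and q0: "0 < q" and r: "0 \<le> r" "r < 1/q"
  shows "continuous_on ({-L..L} \<times> {-r..r}) (\<lambda>p. U c (fst p) a0 a1 (snd p))"
proof -
  define M where "M = max \<bar>a0\<bar> (\<bar>a1\<bar>/q) * exp (4*L/q^2)"
  have M0: "0 \<le> M" unfolding M_def by simp
  have qr: "q * r < 1" using r q0 by (simp add: field_simps)
  have ul: "uniform_limit ({-L..L} \<times> {-r..r}) (\<lambda>n p. \<Sum>i<n. Aco c (fst p) a0 a1 i * (snd p)^i)
     (\<lambda>p. suminf (\<lambda>i. Aco c (fst p) a0 a1 i * (snd p)^i)) sequentially"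
  proof (rule Weierstrass_m_test)
    fix n :: nat and p :: "real \<times> real" assume p: "p \<in> {-L..L} \<times> {-r..r}"
    then have lL: "\<bar>fst p\<bar> \<le> L" and tr: "\<bar>snd p\<bar> \<le> r" by auto
    have "\<bar>Aco c (fst p) a0 a1 n\<bar> \<le> M * q^n" using Aco_uniform[OF c0 cq q0 lL] unfolding M_def by simp
    moreover have "\<bar>snd p\<bar>^n \<le> r^n" using tr by (simp add: power_mono)
    ultimately have "\<bar>Aco c (fst p) a0 a1 n\<bar> * \<bar>snd p\<bar>^n \<le> (M * q^n) * r^n"
      by (intro mult_mono) (use M0 q0 in auto)
    then show "norm (Aco c (fst p) a0 a1 n * (snd p)^n) \<le> M * (q*r)^n"
      by (simp add: abs_mult power_abs power_mult_distrib mult_ac)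
  next
    show "summable (\<lambda>n. M * (q*r)^n)"
      using qr q0 r by (intro summable_mult summable_geometric) auto
  qed
  have "continuous_on ({-L..L} \<times> {-r..r}) (\<lambda>p. suminf (\<lambda>i. Aco c (fst p) a0 a1 i * (snd p)^i))"
  proof (rule uniform_limit_theorem[OF _ ul])
    have "continuous_on ({-L..L} \<times> {-r..r}) (\<lambda>p. \<Sum>i<n. Aco c (fst p) a0 a1 i * (snd p)^i)" for n
    proof (intro continuous_on_sum continuous_intros)
      fix i
      show "continuous_on ({-L..L} \<times> {-r..r}) (\<lambda>p. Aco c (fst p) a0 a1 i)"
        using continuous_on_compose[OF continuous_on_fst[OF continuous_on_id] continuous_on_subset[OF Aco_cont]]
        by (auto simp: o_def)
    qed
    then show "\<forall>\<^sub>F n in sequentially. continuous_on ({-L..L} \<times> {-r..r}) (\<lambda>p. \<Sum>i<n. Aco c (fst p) a0 a1 i * (snd p)^i)"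
      by simp
  qed simp
  then show ?thesis unfolding U_def .
qed

lemma riccati_identity:
  fixes c T :: real and f f' g g' :: "real \<Rightarrow> real"
  assumes T: "0 < T"
    and df: "\<And>t. t \<in> {0..T} \<Longrightarrow> (f has_real_derivative f' t) (at t within {0..T})"
    and dg: "\<And>t. t \<in> {0..T} \<Longrightarrow> (g has_real_derivative g' t) (at t within {0..T})"
    and cf': "continuous_on {0..T} f'" and cg': "continuous_on {0..T} g'"
    and fT: "f T = 0"
  shows "integral {0..T} (\<lambda>t. (1 - c*t) * (f' t)^2) - (f 0)^2 =
     integral {0..T} (\<lambda>t. (1 - c*t) * (f' t - g t * f t)^2) + (- g 0 - 1) * (f 0)^2
     + integral {0..T} (\<lambda>t. (c * g t - (1 - c*t) * g' t - (1 - c*t) * (g t)^2) * (f t)^2)"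
proof -
  have cf: "continuous_on {0..T} f" by (rule DERIV_continuous_on[OF df])
  have cg: "continuous_on {0..T} g" by (rule DERIV_continuous_on[OF dg])
  define P where "P t = (1 - c*t) * g t * (f t)^2" for t
  define P' where "P' t = - c * g t * (f t)^2 + (1 - c*t) * g' t * (f t)^2 + (1 - c*t) * g t * (2 * f t * f' t)" for t
  have dP: "(P has_vector_derivative P' t) (at t within {0..T})" if "t \<in> {0..T}" for t
  proof -
    have "(P has_real_derivative P' t) (at t within {0..T})"
      unfolding P_def[abs_def] P'_def
      by (rule derivative_eq_intros df[OF that] dg[OF that] refl)+ (simp add: algebra_simps)
    then show ?thesis by (simp add: has_real_derivative_iff_has_vector_derivative)
  qed
  have iP: "(P' has_integral (P T - P 0)) {0..T}"
    by (rule fundamental_theorem_of_calculus) (use T dP in auto)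
  have PT: "P T - P 0 = - g 0 * (f 0)^2" unfolding P_def using fT by simp
  define F1 where "F1 t = (1 - c*t) * (f' t - g t * f t)^2" for t
  define F3 where "F3 t = (c * g t - (1 - c*t) * g' t - (1 - c*t) * (g t)^2) * (f t)^2" for t
  have i1: "(F1 has_integral integral {0..T} F1) {0..T}"
    unfolding F1_def by (intro integrable_integral integrable_continuous_interval continuous_intros cf cg cf' cg')
  have i3: "(F3 has_integral integral {0..T} F3) {0..T}"
    unfolding F3_def by (intro integrable_integral integrable_continuous_interval continuous_intros cf cg cf' cg')
  have "((\<lambda>t. F1 t + P' t + F3 t) has_integral (integral {0..T} F1 + (P T - P 0) + integral {0..T} F3)) {0..T}"
    by (intro has_integral_add i1 i3 iP)
  then have "((\<lambda>t. (1 - c*t) * (f' t)^2) has_integral (integral {0..T} F1 + (P T - P 0) + integral {0..T} F3)) {0..T}"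
    by (rule has_integral_eq[rotated]) (simp add: F1_def F3_def P'_def power2_eq_square algebra_simps)
  then have "integral {0..T} (\<lambda>t. (1 - c*t) * (f' t)^2) = integral {0..T} F1 + (P T - P 0) + integral {0..T} F3"
    by (rule integral_unique)
  then show ?thesis unfolding PT F1_def[symmetric] F3_def[symmetric] by (simp add: algebra_simps)
qed

lemma energy_identity:
  fixes c T lam :: real and u u' u'' :: "real \<Rightarrow> real"
  assumes T: "0 < T"
    and du: "\<And>t. t \<in> {0..T} \<Longrightarrow> (u has_real_derivative u' t) (at t within {0..T})"
    and du': "\<And>t. t \<in> {0..T} \<Longrightarrow> (u' has_real_derivative u'' t) (at t within {0..T})"
    and ode: "\<And>t. t \<in> {0..T} \<Longrightarrow> - u'' t + c / (1 - c*t) * u' t = lam * u t"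
    and wpos: "\<And>t. t \<in> {0..T} \<Longrightarrow> 0 < 1 - c*t"
    and bc0: "u' 0 = - u 0" and bcT: "u T = 0"
  shows "integral {0..T} (\<lambda>t. (1 - c*t) * (u' t)^2) - (u 0)^2 = lam * integral {0..T} (\<lambda>t. (1 - c*t) * (u t)^2)"
proof -
  have cu: "continuous_on {0..T} u" by (rule DERIV_continuous_on[OF du])
  have cu': "continuous_on {0..T} u'" by (rule DERIV_continuous_on[OF du'])
  define Q where "Q t = (1 - c*t) * u' t * u t" for t
  define Q' where "Q' t = (1 - c*t) * (u' t)^2 - lam * ((1 - c*t) * (u t)^2)" for t
  have dQ: "(Q has_vector_derivative Q' t) (at t within {0..T})" if t: "t \<in> {0..T}" for t
  proof -
    have w: "1 - c*t \<noteq> 0" using wpos[OF t] by simp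
    have "(Q has_real_derivative (- c * u' t * u t + (1 - c*t) * u'' t * u t + (1 - c*t) * u' t * u' t)) (at t within {0..T})"
      unfolding Q_def[abs_def]
      by (rule derivative_eq_intros du[OF t] du'[OF t] refl)+ (simp add: algebra_simps)
    moreover have "- c * u' t * u t + (1 - c*t) * u'' t * u t + (1 - c*t) * u' t * u' t = Q' t"
    proof -
      have u2: "u'' t = c/(1-c*t) * u' t - lam * u t" using ode[OF t] by linarith
      show ?thesis unfolding u2 Q'_def using w by (simp add: field_simps power2_eq_square)
    qed
    ultimately show ?thesis by (simp add: has_real_derivative_iff_has_vector_derivative)
  qed
  have iQ: "(Q' has_integral (Q T - Q 0)) {0..T}"
    by (rule fundamental_theorem_of_calculus) (use T dQ in auto)
  have QT: "Q T - Q 0 = (u 0)^2" unfolding Q_def using bcT bc0 by (simp add: power2_eq_square)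
  have i1: "((\<lambda>t. (1 - c*t) * (u' t)^2) has_integral integral {0..T} (\<lambda>t. (1 - c*t) * (u' t)^2)) {0..T}"
    by (intro integrable_integral integrable_continuous_interval continuous_intros cu cu')
  have i2: "((\<lambda>t. (1 - c*t) * (u t)^2) has_integral integral {0..T} (\<lambda>t. (1 - c*t) * (u t)^2)) {0..T}"
    by (intro integrable_integral integrable_continuous_interval continuous_intros cu cu')
  have "(Q' has_integral (integral {0..T} (\<lambda>t. (1 - c*t) * (u' t)^2) - lam * integral {0..T} (\<lambda>t. (1 - c*t) * (u t)^2))) {0..T}"
  proof -
    have i2': "((\<lambda>t. lam * ((1 - c*t) * (u t)^2)) has_integral lam * integral {0..T} (\<lambda>t. (1 - c*t) * (u t)^2)) {0..T}"
      using has_integral_cmul[OF i2, of lam] by simp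
    show ?thesis unfolding Q'_def[abs_def] by (rule has_integral_diff[OF i1 i2'])
  qed
  then have "integral {0..T} (\<lambda>t. (1 - c*t) * (u' t)^2) - lam * integral {0..T} (\<lambda>t. (1 - c*t) * (u t)^2) = (u 0)^2"
    using has_integral_unique[OF _ iQ] QT by simp
  then show ?thesis by simp
qed

lemma integral_pos_w:
  fixes c T :: real and u :: "real \<Rightarrow> real"
  assumes T: "0 < T" and cu: "continuous_on {0..T} u"
    and wpos: "\<And>t. t \<in> {0..T} \<Longrightarrow> 0 < 1 - c*t"
    and nz: "t0 \<in> {0..T}" "u t0 \<noteq> 0"
  shows "0 < integral {0..T} (\<lambda>t. (1 - c*t) * (u t)^2)"
proof -
  have cont: "continuous_on {0..T} (\<lambda>t. (1 - c*t) * (u t)^2)" by (intro continuous_intros cu)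
  have nn: "\<And>t. t \<in> {0..T} \<Longrightarrow> 0 \<le> (1 - c*t) * (u t)^2" using wpos by (simp add: less_imp_le)
  have ge: "0 \<le> integral {0..T} (\<lambda>t. (1 - c*t) * (u t)^2)"
    by (rule integral_nonneg) (use integrable_continuous_interval[OF cont] nn in auto)
  show ?thesis
  proof (rule ccontr)
    assume "\<not> ?thesis"
    then have z: "integral {0..T} (\<lambda>t. (1 - c*t) * (u t)^2) = 0" using ge by linarith
    have hi: "((\<lambda>t. (1 - c*t) * (u t)^2) has_integral 0) (cbox 0 T)"
      using integrable_integral[OF integrable_continuous_interval[OF cont]] z by simp
    have "(1 - c*t0) * (u t0)^2 = 0"
      by (rule has_integral_0_cbox_imp_0[OF _ _ hi]) (use cont nn T nz in auto)
    then show False using wpos[OF nz(1)] nz(2) by simp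
  qed
qed

lemma G_pointwise:
  fixes c t \<delta> :: real
  assumes c0: "0 \<le> c" and t: "0 \<le> t" "t \<le> \<delta>" and cd: "c * \<delta> \<le> 1/3"
  shows "c * (-1 + c^2*t/2) - (1 - c*t) * (c^2/2) - (1 - c*t) * (-1 + c^2*t/2)^2 = (-1 - c - c^2/2) * (1 - c*t) + (c^3*t/2 - c^3*t^2 - c^4*t^2/4 + c^5*t^3/4)"
    and "c * (-1 + c^2*t/2) - (1 - c*t) * (c^2/2) - (1 - c*t) * (-1 + c^2*t/2)^2 \<ge> (-1 - c - c^2/2 - 3/2 * (c^3*\<delta>^2 + c^4*\<delta>^2/4)) * (1 - c*t)"
    and "c * (-1 + c^2*t/2) - (1 - c*t) * (c^2/2) - (1 - c*t) * (-1 + c^2*t/2)^2 \<le> (-1 - c - c^2/2) * (1 - c*t) + c^3 * \<delta>"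
proof -
  show eq: "c * (-1 + c^2*t/2) - (1 - c*t) * (c^2/2) - (1 - c*t) * (-1 + c^2*t/2)^2 = (-1 - c - c^2/2) * (1 - c*t) + (c^3*t/2 - c^3*t^2 - c^4*t^2/4 + c^5*t^3/4)"
    by (simp add: power2_eq_square power3_eq_cube field_simps) (simp add: algebra_simps numeral_eq_Suc)
  have d0: "0 \<le> \<delta>" using t by linarith
  have ct: "c * t \<le> 1/3" using cd mult_left_mono[OF t(2) c0] by linarith
  have ct0: "0 \<le> c*t" using c0 t by simp
  have tt: "t^2 \<le> \<delta>^2" using t by (simp add: power_mono)
  have p1: "0 \<le> c^3*t/2" using c0 t by simp
  have p2: "0 \<le> c^5*t^3/4" using c0 t by simp
  have q1: "c^3*t^2 \<le> c^3*\<delta>^2" using tt c0 by (simp add: mult_left_mono)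
  have q2: "c^4*t^2/4 \<le> c^4*\<delta>^2/4" using tt c0 by (simp add: mult_left_mono)
  define X where "X = c^3*\<delta>^2 + c^4*\<delta>^2/4"
  have X0: "0 \<le> X" unfolding X_def using c0 by simp
  have "X * (c*t*3) \<le> X * 1" using X0 ct by (intro mult_left_mono) auto
  then have "X \<le> 3/2 * X * (1 - c*t)" by (simp add: algebra_simps)
  then show "c * (-1 + c^2*t/2) - (1 - c*t) * (c^2/2) - (1 - c*t) * (-1 + c^2*t/2)^2 \<ge> (-1 - c - c^2/2 - 3/2 * (c^3*\<delta>^2 + c^4*\<delta>^2/4)) * (1 - c*t)"
    unfolding eq X_def[symmetric] using p1 p2 q1 q2 unfolding X_def by (simp add: algebra_simps)
  have r1: "c^5*t^3/4 \<le> c^3*t/2"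
  proof -
    have "(c*t)^2 \<le> 1" using ct ct0 by (simp add: power_le_one)
    then have "c^3*t * (c*t)^2 \<le> c^3*t * 1" using p1 by (intro mult_left_mono) auto
    moreover have "c^3*t * (c*t)^2 = c^5*t^3" by (simp add: power2_eq_square power3_eq_cube numeral_eq_Suc algebra_simps)
    ultimately have "c^5*t^3 \<le> c^3*t" by simp
    then show ?thesis using p1 by linarith
  qed
  have r2: "c^3 * t \<le> c^3 * \<delta>" using t c0 by (simp add: mult_left_mono)
  have r3: "0 \<le> c^3*t^2" "0 \<le> c^4*t^2/4" using c0 by auto
  show "c * (-1 + c^2*t/2) - (1 - c*t) * (c^2/2) - (1 - c*t) * (-1 + c^2*t/2)^2 \<le> (-1 - c - c^2/2) * (1 - c*t) + c^3 * \<delta>"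
    unfolding eq using r1 r2 r3 by linarith
qed

lemma integral_cmul_real: "integral S (\<lambda>x. (k::real) * f x) = k * integral S f"
  using integral_cmul[of S k f] by simp

lemma lower_bound_eig:
  fixes c \<delta> T lam :: real and u u' u'' :: "real \<Rightarrow> real"
  assumes c0: "0 \<le> c" and cd: "c*\<delta> \<le> 1/3" and T: "0 < T" "T \<le> \<delta>"
    and du: "\<And>t. t \<in> {0..T} \<Longrightarrow> (u has_real_derivative u' t) (at t within {0..T})"
    and du': "\<And>t. t \<in> {0..T} \<Longrightarrow> (u' has_real_derivative u'' t) (at t within {0..T})"
    and ode: "\<And>t. t \<in> {0..T} \<Longrightarrow> - u'' t + c / (1 - c*t) * u' t = lam * u t"
    and bc0: "u' 0 = - u 0" and bcT: "u T = 0"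
    and nz: "t0 \<in> {0..T}" "u t0 \<noteq> 0"
  shows "-1 - c - c^2/2 - 3/2*(c^3*\<delta>^2 + c^4*\<delta>^2/4) \<le> lam"
proof -
  define \<mu> where "\<mu> = -1 - c - c^2/2 - 3/2*(c^3*\<delta>^2 + c^4*\<delta>^2/4)"
  have wpos: "0 < 1 - c*t" if "t \<in> {0..T}" for t
  proof -
    have "c*t \<le> c*\<delta>" using that T c0 by (intro mult_left_mono) auto
    then show ?thesis using cd by linarith
  qed
  have cu: "continuous_on {0..T} u" by (rule DERIV_continuous_on[OF du])
  have cu': "continuous_on {0..T} u'" by (rule DERIV_continuous_on[OF du'])
  have dG: "((\<lambda>t. -1 + c^2*t/2) has_real_derivative c^2/2) (at t within {0..T})" for t
    by (auto intro!: derivative_eq_intros)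
  note RI = riccati_identity[OF T(1) du dG cu' continuous_on_const bcT, of c]
  note EI = energy_identity[OF T(1) du du' ode wpos bc0 bcT]
  define I where "I = integral {0..T} (\<lambda>t. (1 - c*t) * (u t)^2)"
  have Ipos: "0 < I" unfolding I_def by (rule integral_pos_w[OF T(1) cu wpos nz])
  have T1: "0 \<le> integral {0..T} (\<lambda>t. (1 - c*t) * (u' t - (-1 + c^2*t/2) * u t)^2)"
    by (rule integral_nonneg) (use wpos in \<open>auto intro!: integrable_continuous_interval continuous_intros cu cu' simp: less_imp_le\<close>)
  have T3: "\<mu> * I \<le> integral {0..T} (\<lambda>t. (c * (-1 + c^2*t/2) - (1 - c*t) * (c^2/2) - (1 - c*t) * (-1 + c^2*t/2)^2) * (u t)^2)"
  proof -
    have "\<mu> * I = integral {0..T} (\<lambda>t. \<mu> * ((1 - c*t) * (u t)^2))" unfolding I_def integral_cmul_real ..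
    also have "\<dots> \<le> integral {0..T} (\<lambda>t. (c * (-1 + c^2*t/2) - (1 - c*t) * (c^2/2) - (1 - c*t) * (-1 + c^2*t/2)^2) * (u t)^2)"
    proof (rule integral_le)
      show "(\<lambda>t. \<mu> * ((1 - c*t) * (u t)^2)) integrable_on {0..T}"
        by (intro integrable_continuous_interval continuous_intros cu)
      show "(\<lambda>t. (c * (-1 + c^2*t/2) - (1 - c*t) * (c^2/2) - (1 - c*t) * (-1 + c^2*t/2)^2) * (u t)^2) integrable_on {0..T}"
        by (intro integrable_continuous_interval continuous_intros cu) auto
      fix t assume t: "t \<in> {0..T}"
      have "\<mu> * (1 - c*t) \<le> c * (-1 + c^2*t/2) - (1 - c*t) * (c^2/2) - (1 - c*t) * (-1 + c^2*t/2)^2"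
        unfolding \<mu>_def using G_pointwise(2)[OF c0, of t \<delta>] t T cd by auto
      then have "\<mu> * (1 - c*t) * (u t)^2 \<le> (c * (-1 + c^2*t/2) - (1 - c*t) * (c^2/2) - (1 - c*t) * (-1 + c^2*t/2)^2) * (u t)^2"
        by (rule mult_right_mono) simp
      then show "\<mu> * ((1 - c*t) * (u t)^2) \<le> (c * (-1 + c^2*t/2) - (1 - c*t) * (c^2/2) - (1 - c*t) * (-1 + c^2*t/2)^2) * (u t)^2"
        by (simp add: mult.assoc)
    qed
    finally show ?thesis .
  qed
  have "lam * I \<ge> \<mu> * I" using RI EI T1 T3 unfolding I_def by simp
  then have "\<mu> \<le> lam" using Ipos by simp
  then show ?thesis unfolding \<mu>_def .
qed

lemma ground_state:
  fixes c T lam :: real and u u' u'' f f' :: "real \<Rightarrow> real"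
  assumes T: "0 < T" and wpos: "\<And>t. t \<in> {0..T} \<Longrightarrow> 0 < 1 - c*t"
    and du: "\<And>t. t \<in> {0..T} \<Longrightarrow> (u has_real_derivative u' t) (at t within {0..T})"
    and du': "\<And>t. t \<in> {0..T} \<Longrightarrow> (u' has_real_derivative u'' t) (at t within {0..T})"
    and cu'': "continuous_on {0..T} u''"
    and ode: "\<And>t. t \<in> {0..T} \<Longrightarrow> (1 - c*t) * u'' t - c * u' t + lam * (1 - c*t) * u t = 0"
    and upos: "\<And>t. t \<in> {0..T} \<Longrightarrow> 0 < u t" and bc: "u' 0 = - u 0"
    and df: "\<And>t. t \<in> {0..T} \<Longrightarrow> (f has_real_derivative f' t) (at t within {0..T})"
    and cf': "continuous_on {0..T} f'" and fT: "f T = 0"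
  shows "lam * integral {0..T} (\<lambda>t. (1 - c*t) * (f t)^2) \<le> integral {0..T} (\<lambda>t. (1 - c*t) * (f' t)^2) - (f 0)^2"
proof -
  have cu: "continuous_on {0..T} u" by (rule DERIV_continuous_on[OF du])
  have cu': "continuous_on {0..T} u'" by (rule DERIV_continuous_on[OF du'])
  have cf: "continuous_on {0..T} f" by (rule DERIV_continuous_on[OF df])
  have unz: "\<And>t. t \<in> {0..T} \<Longrightarrow> u t \<noteq> 0" using upos by (metis less_irrefl)
  define g where "g t = u' t / u t" for t
  define g' where "g' t = (u'' t * u t - u' t * u' t) / (u t * u t)" for t
  have dg: "(g has_real_derivative g' t) (at t within {0..T})" if t: "t \<in> {0..T}" for t
    unfolding g_def[abs_def] g'_def by (rule DERIV_divide[OF du'[OF t] du[OF t] unz[OF t]])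
  have cg': "continuous_on {0..T} g'"
    unfolding g'_def[abs_def] by (intro continuous_intros cu cu' cu'') (auto dest: unz)
  note RI = riccati_identity[OF T df dg cf' cg' fT, of c]
  have g0: "- g 0 - 1 = 0"
  proof -
    have "0 \<in> {0..T}" using T by simp
    then have "u 0 \<noteq> 0" by (rule unz)
    then show ?thesis unfolding g_def bc by simp
  qed
  have V: "(c * g t - (1 - c*t) * g' t - (1 - c*t) * (g t)^2) * (f t)^2 = lam * ((1 - c*t) * (f t)^2)"
    if t: "t \<in> {0..T}" for t
  proof -
    have nz: "u t \<noteq> 0" by (rule unz[OF t])
    have e: "(1 - c*t) * u'' t = c * u' t - lam * (1 - c*t) * u t" using ode[OF t] by linarith
    have "c * g t - (1 - c*t) * g' t - (1 - c*t) * (g t)^2 = (c * u' t - (1 - c*t) * u'' t) / u t"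
      unfolding g_def g'_def using nz by (simp add: field_simps power2_eq_square)
    also have "\<dots> = lam * (1 - c*t)" unfolding e using nz by (simp add: field_simps)
    finally show ?thesis by simp
  qed
  have T3: "integral {0..T} (\<lambda>t. (c * g t - (1 - c*t) * g' t - (1 - c*t) * (g t)^2) * (f t)^2) = lam * integral {0..T} (\<lambda>t. (1 - c*t) * (f t)^2)"
    using integral_cong[of "{0..T}", OF V] by (simp add: integral_cmul_real)
  have T1: "0 \<le> integral {0..T} (\<lambda>t. (1 - c*t) * (f' t - g t * f t)^2)"
  proof (rule integral_nonneg)
    have cg: "continuous_on {0..T} g" unfolding g_def[abs_def] by (intro continuous_intros cu cu') (auto dest: unz)
    show "(\<lambda>t. (1 - c*t) * (f' t - g t * f t)^2) integrable_on {0..T}"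
      by (intro integrable_continuous_interval continuous_intros cf cf' cg)
    show "\<And>t. t \<in> {0..T} \<Longrightarrow> 0 \<le> (1 - c*t) * (f' t - g t * f t)^2" using wpos by (simp add: less_imp_le)
  qed
  show ?thesis using RI g0 T3 T1 by simp
qed

definition Ftest :: "real \<Rightarrow> real \<Rightarrow> real" where
  "Ftest c t = exp (-t + c^2*t^2/4)"

lemma Ftest_deriv: "((\<lambda>t. Ftest c t - k) has_real_derivative (-1 + c^2*t/2) * Ftest c t) (at t within S)"
proof -
  have "((\<lambda>t. -t + c^2*t^2/4) has_real_derivative (-1 + c^2*t/2)) (at t within S)"
    by (auto intro!: derivative_eq_intros simp: power2_eq_square field_simps)
  from DERIV_exp[THEN DERIV_chain2, OF this]
  have "((\<lambda>t. exp (-t + c^2*t^2/4)) has_real_derivative exp (-t + c^2*t^2/4) * (-1 + c^2*t/2)) (at t within S)" .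
  then have "((\<lambda>t. exp (-t + c^2*t^2/4) - k) has_real_derivative exp (-t + c^2*t^2/4) * (-1 + c^2*t/2) - 0) (at t within S)"
    by (intro DERIV_diff DERIV_const)
  then show ?thesis unfolding Ftest_def by (simp add: mult.commute)
qed

lemma Ftest_cont: "continuous_on S (Ftest c)"
  unfolding Ftest_def[abs_def] by (intro continuous_intros) auto

lemma test_function:
  fixes c \<delta> :: real
  assumes c0: "0 \<le> c" and c1: "c \<le> 1" and cd: "c*\<delta> \<le> 1/3" and d5: "5 \<le> \<delta>"
  shows "integral {0..\<delta>} (\<lambda>t. (1-c*t) * ((-1 + c^2*t/2) * Ftest c t)^2) - (Ftest c 0 - Ftest c \<delta>)^2
          \<le> (-1-c-c^2/2) * integral {0..\<delta>} (\<lambda>t. (1-c*t)*(Ftest c t - Ftest c \<delta>)^2) + ((Ftest c \<delta>)^2 * \<delta> + c^3*\<delta>^2)"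
    and "1/50 \<le> integral {0..\<delta>} (\<lambda>t. (1-c*t)*(Ftest c t - Ftest c \<delta>)^2)"
proof -
  define Fd where "Fd = Ftest c \<delta>"
  define f where "f t = Ftest c t - Fd" for t
  define f' where "f' t = (-1 + c^2*t/2) * Ftest c t" for t
  define \<mu> where "\<mu> = -1-c-c^2/2"
  have d0: "0 < \<delta>" using d5 by simp
  have ct: "0 \<le> c*t" "c*t \<le> 1/3" if "t \<in> {0..\<delta>}" for t
  proof -
    show "0 \<le> c*t" using that c0 by simp
    have "c*t \<le> c*\<delta>" using that c0 by (intro mult_left_mono) auto
    then show "c*t \<le> 1/3" using cd by linarith
  qed
  have Gb: "-1 \<le> -1 + c^2*t/2" "-1 + c^2*t/2 \<le> 0" if "t \<in> {0..\<delta>}" for t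
  proof -
    have "c^2*t = c*(c*t)" by (simp add: power2_eq_square)
    moreover have "c*(c*t) \<le> 1 * (1/3)" using ct[OF that] c0 c1 by (intro mult_mono) auto
    moreover have "0 \<le> c*(c*t)" using ct[OF that] c0 by simp
    ultimately show "-1 \<le> -1 + c^2*t/2" "-1 + c^2*t/2 \<le> 0" by auto
  qed
  have Fle1: "Ftest c t \<le> 1" if "t \<in> {0..\<delta>}" for t
  proof -
    have "c^2*t^2/4 \<le> t"
    proof -
      have "c^2*t^2 = (c^2*t)*t" by (simp add: power2_eq_square)
      moreover have "(c^2*t)*t \<le> 2*t" using Gb[OF that] that by (intro mult_right_mono) auto
      ultimately have "c^2*t^2 \<le> 2*t" by linarith
      then show ?thesis using that by simp
    qed
    then show ?thesis unfolding Ftest_def by simp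
  qed
  have Fge: "Fd \<le> Ftest c t" if t: "t \<in> {0..\<delta>}" for t
  proof -
    have e: "c^2*(\<delta>^2 - t^2) = (c*(c*(\<delta>+t)))*(\<delta> - t)" by (simp add: power2_eq_square algebra_simps)
    have "c*(\<delta>+t) \<le> c*(2*\<delta>)" using t c0 by (intro mult_left_mono) auto
    then have "c*(\<delta>+t) \<le> 2/3" using cd by linarith
    then have "c*(c*(\<delta>+t)) \<le> 1*(2/3)" using c0 c1 t by (intro mult_mono) auto
    then have "(c*(c*(\<delta>+t)))*(\<delta> - t) \<le> (2/3)*(\<delta> - t)" using t by (intro mult_right_mono) auto
    then have "c^2*(\<delta>^2 - t^2)/4 \<le> \<delta> - t" using e t by simp
    moreover have "c^2*(\<delta>^2 - t^2)/4 = c^2*\<delta>^2/4 - c^2*t^2/4" by (simp add: right_diff_distrib diff_divide_distrib)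
    ultimately have "-\<delta> + c^2*\<delta>^2/4 \<le> -t + c^2*t^2/4" by linarith
    then show ?thesis unfolding Fd_def Ftest_def by simp
  qed
  have f01: "0 \<le> f t" "f t \<le> 1" if "t \<in> {0..\<delta>}" for t
  proof -
    show "0 \<le> f t" unfolding f_def using Fge[OF that] by simp
    have "0 < Fd" unfolding Fd_def Ftest_def by simp
    then show "f t \<le> 1" unfolding f_def using Fle1[OF that] by simp
  qed
  have df: "(f has_real_derivative f' t) (at t within {0..\<delta>})" for t
    unfolding f_def[abs_def] f'_def by (rule Ftest_deriv)
  have cf: "continuous_on {0..\<delta>} f" unfolding f_def[abs_def] by (intro continuous_intros Ftest_cont)
  have cf': "continuous_on {0..\<delta>} f'" unfolding f'_def[abs_def] by (intro continuous_intros Ftest_cont) auto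
  have fT: "f \<delta> = 0" unfolding f_def Fd_def by simp
  have dG: "((\<lambda>t. -1 + c^2*t/2) has_real_derivative c^2/2) (at t within {0..\<delta>})" for t
    by (auto intro!: derivative_eq_intros)
  note RI = riccati_identity[OF d0 df dG cf' continuous_on_const fT, of c]
  define I where "I = integral {0..\<delta>} (\<lambda>t. (1-c*t)*(f t)^2)"
  have T1: "integral {0..\<delta>} (\<lambda>t. (1 - c*t) * (f' t - (-1 + c^2*t/2) * f t)^2) \<le> Fd^2 * \<delta>"
  proof -
    have "integral {0..\<delta>} (\<lambda>t. (1 - c*t) * (f' t - (-1 + c^2*t/2) * f t)^2) \<le> integral {0..\<delta>} (\<lambda>t. Fd^2)"
    proof (rule integral_le)
      show "(\<lambda>t. (1 - c*t) * (f' t - (-1 + c^2*t/2) * f t)^2) integrable_on {0..\<delta>}"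
        by (intro integrable_continuous_interval continuous_intros cf cf') auto
      show "(\<lambda>t. Fd^2) integrable_on {0..\<delta>}" by (rule integrable_const_ivl)
      fix t assume t: "t \<in> {0..\<delta>}"
      have e: "f' t - (-1 + c^2*t/2) * f t = (-1 + c^2*t/2) * Fd" unfolding f_def f'_def by (simp add: field_simps)
      have a: "\<bar>-1 + c^2*t/2\<bar> \<le> 1" using Gb[OF t] by (auto simp: abs_le_iff)
      have "\<bar>-1 + c^2*t/2\<bar>^2 \<le> 1" by (rule power_le_one) (use a in auto)
      then have g2: "(-1 + c^2*t/2)^2 \<le> 1" by simp
      have "(1 - c*t) * ((-1 + c^2*t/2) * Fd)^2 = (1 - c*t) * (-1 + c^2*t/2)^2 * Fd^2" by (simp add: power_mult_distrib)
      also have "\<dots> \<le> 1 * 1 * Fd^2" using ct[OF t] g2 by (intro mult_mono) auto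
      finally show "(1 - c*t) * (f' t - (-1 + c^2*t/2) * f t)^2 \<le> Fd^2" unfolding e by simp
    qed
    also have "\<dots> = Fd^2 * \<delta>" using d0 by simp
    finally show ?thesis .
  qed
  have T3: "integral {0..\<delta>} (\<lambda>t. (c * (-1 + c^2*t/2) - (1 - c*t) * (c^2/2) - (1 - c*t) * (-1 + c^2*t/2)^2) * (f t)^2) \<le> \<mu> * I + c^3*\<delta>^2"
  proof -
    have "integral {0..\<delta>} (\<lambda>t. (c * (-1 + c^2*t/2) - (1 - c*t) * (c^2/2) - (1 - c*t) * (-1 + c^2*t/2)^2) * (f t)^2)
        \<le> integral {0..\<delta>} (\<lambda>t. \<mu> * ((1-c*t)*(f t)^2) + c^3*\<delta>)"
    proof (rule integral_le)
      show "(\<lambda>t. (c * (-1 + c^2*t/2) - (1 - c*t) * (c^2/2) - (1 - c*t) * (-1 + c^2*t/2)^2) * (f t)^2) integrable_on {0..\<delta>}"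
        by (intro integrable_continuous_interval continuous_intros cf) auto
      show "(\<lambda>t. \<mu> * ((1-c*t)*(f t)^2) + c^3*\<delta>) integrable_on {0..\<delta>}"
        by (intro integrable_continuous_interval continuous_intros cf)
      fix t assume t: "t \<in> {0..\<delta>}"
      have V: "c * (-1 + c^2*t/2) - (1 - c*t) * (c^2/2) - (1 - c*t) * (-1 + c^2*t/2)^2 \<le> \<mu> * (1 - c*t) + c^3 * \<delta>"
        unfolding \<mu>_def using G_pointwise(3)[OF c0, of t \<delta>] t cd by auto
      have f2: "0 \<le> (f t)^2" "(f t)^2 \<le> 1" using f01[OF t] by (auto simp: power_le_one)
      have c3: "0 \<le> c^3*\<delta>" using c0 d0 by simp
      have "(c * (-1 + c^2*t/2) - (1 - c*t) * (c^2/2) - (1 - c*t) * (-1 + c^2*t/2)^2) * (f t)^2 \<le> (\<mu> * (1 - c*t) + c^3 * \<delta>) * (f t)^2"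
        using V f2 by (intro mult_right_mono) auto
      also have "\<dots> = \<mu> * ((1-c*t)*(f t)^2) + c^3*\<delta> * (f t)^2" by (simp add: algebra_simps)
      also have "\<dots> \<le> \<mu> * ((1-c*t)*(f t)^2) + c^3*\<delta> * 1" using f2 c3 by (intro add_left_mono mult_left_mono) auto
      finally show "(c * (-1 + c^2*t/2) - (1 - c*t) * (c^2/2) - (1 - c*t) * (-1 + c^2*t/2)^2) * (f t)^2 \<le> \<mu> * ((1-c*t)*(f t)^2) + c^3*\<delta>" by simp
    qed
    also have "\<dots> = \<mu> * I + c^3*\<delta>^2"
    proof -
      have i1: "(\<lambda>t. \<mu> * ((1-c*t)*(f t)^2)) integrable_on {0..\<delta>}" by (intro integrable_continuous_interval continuous_intros cf)
      have i2: "(\<lambda>t. c^3*\<delta>) integrable_on {0..\<delta>}" by (rule integrable_const_ivl)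
      show ?thesis unfolding integral_add[OF i1 i2] I_def integral_cmul_real using d0 by (simp add: power2_eq_square)
    qed
    finally show ?thesis .
  qed
  show "integral {0..\<delta>} (\<lambda>t. (1-c*t) * ((-1 + c^2*t/2) * Ftest c t)^2) - (Ftest c 0 - Ftest c \<delta>)^2
          \<le> (-1-c-c^2/2) * integral {0..\<delta>} (\<lambda>t. (1-c*t)*(Ftest c t - Ftest c \<delta>)^2) + ((Ftest c \<delta>)^2 * \<delta> + c^3*\<delta>^2)"
    using RI T1 T3 unfolding f_def f'_def I_def \<mu>_def Fd_def by simp
  show "1/50 \<le> integral {0..\<delta>} (\<lambda>t. (1-c*t)*(Ftest c t - Ftest c \<delta>)^2)"
  proof -
    have Fd9: "Fd \<le> 1/9"
    proof -
      have "c^2*\<delta>^2 \<le> 1" using cd c0 d0 by (simp add: power_mult_distrib[symmetric] power_le_one)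
      then have "-\<delta> + c^2*\<delta>^2/4 \<le> -4" using d5 by linarith
      then have "Fd \<le> exp (-4)" unfolding Fd_def Ftest_def by simp
      moreover have "exp (-4::real) \<le> 1/9"
      proof -
        have "(3::real) \<le> exp 2" using exp_ge_add_one_self[of 2] by simp
        then have "3*3 \<le> exp 2 * exp (2::real)" by (intro mult_mono) auto
        then have "9 \<le> exp (4::real)" by (simp add: exp_add[symmetric])
        then show ?thesis by (simp add: exp_minus divide_simps)
      qed
      ultimately show ?thesis by linarith
    qed
    have "1/50 \<le> integral {0..1} (\<lambda>t. (1-c*t)*(f t)^2)"
    proof -
      have "integral {0..1} (\<lambda>t::real. 1/50) \<le> integral {0..1} (\<lambda>t. (1-c*t)*(f t)^2)"
      proof (rule integral_le)
        show "(\<lambda>t. (1-c*t)*(f t)^2) integrable_on {0..1}"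
          by (intro integrable_continuous_interval continuous_intros continuous_on_subset[OF cf]) (use d5 in auto)
        fix t :: real assume t: "t \<in> {0..1}"
        then have t': "t \<in> {0..\<delta>}" using d5 by auto
        have a: "0 \<le> c^2*t^2/4" by simp
        have b: "t \<le> 1" using t by simp
        have "-1 \<le> -t + c^2*t^2/4" using a b by linarith
        then have "exp (-1) \<le> Ftest c t" unfolding Ftest_def by simp
        moreover have "1/3 \<le> exp (-1::real)" using exp_le by (simp add: exp_minus divide_simps)
        ultimately have "2/9 \<le> f t" unfolding f_def using Fd9 by linarith
        then have "(2/9)^2 \<le> (f t)^2" by (intro power_mono) auto
        moreover have "2/3 \<le> 1 - c*t" using ct[OF t'] by linarith
        ultimately have "(2/3) * (2/9)^2 \<le> (1-c*t)*(f t)^2" by (intro mult_mono) auto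
        then show "1/50 \<le> (1-c*t)*(f t)^2" by (simp add: power2_eq_square)
      qed (rule integrable_const_ivl)
      then show ?thesis by simp
    qed
    also have "\<dots> \<le> I" unfolding I_def
    proof (rule integral_subset_le)
      show "{0..1} \<subseteq> {0..\<delta>}" using d5 by auto
      show "(\<lambda>t. (1-c*t)*(f t)^2) integrable_on {0..1}"
        by (intro integrable_continuous_interval continuous_intros continuous_on_subset[OF cf]) (use d5 in auto)
      show "(\<lambda>t. (1-c*t)*(f t)^2) integrable_on {0..\<delta>}"
        by (intro integrable_continuous_interval continuous_intros cf)
      show "\<forall>t\<in>{0..\<delta>}. 0 \<le> (1-c*t)*(f t)^2"
      proof
        fix t assume t: "t \<in> {0..\<delta>}"
        have "0 \<le> 1 - c*t" using ct(2)[OF t] by linarith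
        then show "0 \<le> (1-c*t)*(f t)^2" by simp
      qed
    qed
    finally show ?thesis unfolding I_def f_def Fd_def .
  qed
qed

lemma series_facts:
  assumes c0: "0 \<le> c" and cd: "c*\<delta> \<le> 1/3" and d0: "0 < \<delta>" and t: "\<bar>t\<bar> < 2*\<delta>"
  shows "(U c l a0 a1 has_real_derivative U1 c l a0 a1 t) (at t)"
    and "(U1 c l a0 a1 has_real_derivative U2 c l a0 a1 t) (at t)"
    and "(1 - c*t) * U2 c l a0 a1 t - c * U1 c l a0 a1 t + l * (1 - c*t) * U c l a0 a1 t = 0"
proof -
  define q where "q = 1/(2*\<delta>)"
  have q0: "0 < q" unfolding q_def using d0 by simp
  have cq: "c \<le> q" unfolding q_def using cd d0 by (simp add: field_simps)
  have tq: "\<bar>t\<bar> < 1/q" unfolding q_def using t by simp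
  show "(U c l a0 a1 has_real_derivative U1 c l a0 a1 t) (at t)" by (rule U_derivs(1)[OF c0 cq q0 tq])
  show "(U1 c l a0 a1 has_real_derivative U2 c l a0 a1 t) (at t)" by (rule U_derivs(2)[OF c0 cq q0 tq])
  show "(1 - c*t) * U2 c l a0 a1 t - c * U1 c l a0 a1 t + l * (1 - c*t) * U c l a0 a1 t = 0" by (rule U_ode[OF c0 cq q0 tq])
qed

lemma series_on:
  assumes c0: "0 \<le> c" and cd: "c*\<delta> \<le> 1/3" and T: "0 < T" "T \<le> \<delta>"
  shows "\<And>t. t \<in> {0..T} \<Longrightarrow> (U c l a0 a1 has_real_derivative U1 c l a0 a1 t) (at t within {0..T})"
    and "\<And>t. t \<in> {0..T} \<Longrightarrow> (U1 c l a0 a1 has_real_derivative U2 c l a0 a1 t) (at t within {0..T})"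
    and "\<And>t. t \<in> {0..T} \<Longrightarrow> (1 - c*t) * U2 c l a0 a1 t - c * U1 c l a0 a1 t + l * (1 - c*t) * U c l a0 a1 t = 0"
    and "\<And>t. t \<in> {0..T} \<Longrightarrow> - U2 c l a0 a1 t + c / (1 - c*t) * U1 c l a0 a1 t = l * U c l a0 a1 t"
    and "\<And>t. t \<in> {0..T} \<Longrightarrow> 0 < 1 - c*t"
    and "continuous_on {0..T} (U c l a0 a1)"
    and "continuous_on {0..T} (U1 c l a0 a1)"
    and "continuous_on {0..T} (U2 c l a0 a1)"
proof -
  have d0: "0 < \<delta>" using T by simp
  have tt: "\<bar>t\<bar> < 2*\<delta>" if "t \<in> {0..T}" for t using that T by auto
  show d1: "\<And>t. t \<in> {0..T} \<Longrightarrow> (U c l a0 a1 has_real_derivative U1 c l a0 a1 t) (at t within {0..T})"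
    using series_facts(1)[OF c0 cd d0 tt] by (rule has_field_derivative_at_within)
  show d2: "\<And>t. t \<in> {0..T} \<Longrightarrow> (U1 c l a0 a1 has_real_derivative U2 c l a0 a1 t) (at t within {0..T})"
    using series_facts(2)[OF c0 cd d0 tt] by (rule has_field_derivative_at_within)
  show od: "\<And>t. t \<in> {0..T} \<Longrightarrow> (1 - c*t) * U2 c l a0 a1 t - c * U1 c l a0 a1 t + l * (1 - c*t) * U c l a0 a1 t = 0"
    using series_facts(3)[OF c0 cd d0 tt] .
  show wp: "\<And>t. t \<in> {0..T} \<Longrightarrow> 0 < 1 - c*t"
  proof -
    fix t assume t: "t \<in> {0..T}"
    have "c*t \<le> c*\<delta>" using t T c0 by (intro mult_left_mono) auto
    then show "0 < 1 - c*t" using cd by linarith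
  qed
  have u2: "U2 c l a0 a1 t = (c * U1 c l a0 a1 t - l * (1 - c*t) * U c l a0 a1 t) / (1 - c*t)" if t: "t \<in> {0..T}" for t
  proof -
    have "(1 - c*t) * U2 c l a0 a1 t = c * U1 c l a0 a1 t - l * (1 - c*t) * U c l a0 a1 t" using od[OF t] by linarith
    then show ?thesis using wp[OF t] by (simp add: field_simps)
  qed
  show "\<And>t. t \<in> {0..T} \<Longrightarrow> - U2 c l a0 a1 t + c / (1 - c*t) * U1 c l a0 a1 t = l * U c l a0 a1 t"
  proof -
    fix t assume t: "t \<in> {0..T}"
    have nz: "1 - c*t \<noteq> 0" using wp[OF t] by simp
    have gen: "\<And>a b w. w \<noteq> 0 \<Longrightarrow> (c*a - l*w*b)/w = c/w*a - l*b" by (simp add: field_simps)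
    have e: "(c * U1 c l a0 a1 t - l * (1 - c*t) * U c l a0 a1 t) / (1 - c*t) = c / (1 - c*t) * U1 c l a0 a1 t - l * U c l a0 a1 t"
      using gen[OF nz] .
    show "- U2 c l a0 a1 t + c / (1 - c*t) * U1 c l a0 a1 t = l * U c l a0 a1 t"
      unfolding u2[OF t] e by simp
  qed
  show cu: "continuous_on {0..T} (U c l a0 a1)" by (rule DERIV_continuous_on[OF d1])
  show cu1: "continuous_on {0..T} (U1 c l a0 a1)" by (rule DERIV_continuous_on[OF d2])
  have nz: "\<forall>t\<in>{0..T}. 1 - c*t \<noteq> 0"
  proof
    fix t assume t: "t \<in> {0..T}"
    show "1 - c*t \<noteq> 0" using wp[OF t] by simp
  qed
  have "continuous_on {0..T} (\<lambda>t. (c * U1 c l a0 a1 t - l * (1 - c*t) * U c l a0 a1 t) / (1 - c*t))"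
    by (intro continuous_intros cu cu1 nz)
  then show "continuous_on {0..T} (U2 c l a0 a1)" by (rule continuous_on_eq) (simp add: u2)
qed

lemma pos_of_nonzero:
  fixes g :: "real \<Rightarrow> real"
  assumes "continuous_on {0..T} g" "0 < g 0" "\<And>t. t \<in> {0..T} \<Longrightarrow> g t \<noteq> 0" "t \<in> {0..T}"
  shows "0 < g t"
proof (rule ccontr)
  assume "\<not> 0 < g t"
  then have "g t \<le> 0" by simp
  moreover have "continuous_on {0..t} g" by (rule continuous_on_subset[OF assms(1)]) (use assms(4) in auto)
  ultimately obtain x where "0 \<le> x" "x \<le> t" "g x = 0" using IVT2'[of g t 0 0] assms(2,4) by auto
  then show False using assms(3)[of x] assms(4) by auto
qed

definition EIG :: "real \<Rightarrow> real \<Rightarrow> real \<Rightarrow> bool" where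
  "EIG c \<delta> lam \<longleftrightarrow> (\<exists>u u' u'' :: real \<Rightarrow> real.
        (\<forall>t\<in>{0..\<delta>}. (u has_real_derivative u' t) (at t within {0..\<delta>}) \<and>
                         (u' has_real_derivative u'' t) (at t within {0..\<delta>})) \<and>
        (\<forall>t\<in>{0..\<delta>}. - u'' t + c / (1 - c * t) * u' t = lam * u t) \<and>
        u' 0 = - u 0 \<and> u \<delta> = 0 \<and>
        (\<exists>t\<in>{0..\<delta>}. u t \<noteq> 0))"

lemma EIG_lower:
  assumes c0: "0 \<le> c" and cd: "c*\<delta> \<le> 1/3" and d0: "0 < \<delta>" and E: "EIG c \<delta> lam"
  shows "-1 - c - c^2/2 - 3/2*(c^3*\<delta>^2 + c^4*\<delta>^2/4) \<le> lam"
proof -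
  obtain u u' u'' where D: "\<forall>t\<in>{0..\<delta>}. (u has_real_derivative u' t) (at t within {0..\<delta>}) \<and>
                         (u' has_real_derivative u'' t) (at t within {0..\<delta>})"
    and O: "\<forall>t\<in>{0..\<delta>}. - u'' t + c / (1 - c * t) * u' t = lam * u t"
    and b0: "u' 0 = - u 0" and bT: "u \<delta> = 0" and nz: "\<exists>t\<in>{0..\<delta>}. u t \<noteq> 0"
    using E unfolding EIG_def by blast
  from nz obtain t0 where t0: "t0 \<in> {0..\<delta>}" "u t0 \<noteq> 0" by blast
  show ?thesis
    by (rule lower_bound_eig[where u=u and u'=u' and u''=u'', OF c0 cd d0 order_refl _ _ _ b0 bT t0]) (use D O in auto)
qed

lemma U_init2: "U c l 1 (-1) 0 = 1" "U1 c l 1 (-1) 0 = -1" "U c l 0 1 0 = 0" "U1 c l 0 1 0 = 1"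
  by (simp_all add: U_init)

lemma upper_exists:
  fixes c \<delta> :: real
  assumes c0: "0 < c" and c1: "c \<le> 1" and cd: "c*\<delta> \<le> 1/3" and d5: "5 \<le> \<delta>"
  shows "\<exists>lam. EIG c \<delta> lam \<and> lam \<le> -1 - c - c^2/2 + 100*((Ftest c \<delta>)^2*\<delta> + c^3*\<delta>^2) + c^4"
proof -
  have c0': "0 \<le> c" using c0 by simp
  have d0: "0 < \<delta>" using d5 by simp
  define \<mu>0 where "\<mu>0 = -1 - c - c^2/2"
  define A where "A = (Ftest c \<delta>)^2*\<delta> + c^3*\<delta>^2"
  define \<mu>p where "\<mu>p = \<mu>0 + 100*A + c^4"
  define E1 where "E1 = 3/2*(c^3*\<delta>^2 + c^4*\<delta>^2/4)"
  define lz where "lz = \<mu>0 - E1 - 1"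
  have A0: "0 \<le> A" unfolding A_def using d0 c0 by simp
  have E10: "0 \<le> E1" unfolding E1_def using c0 by simp
  have c4: "0 < c^4" using c0 by simp
  have l0p: "lz \<le> \<mu>p" unfolding lz_def \<mu>p_def using A0 E10 c4 by simp (smt (verit) A0 E10 c4)
  note SO = series_on[OF c0' cd d0 order_refl]
  have stepa: "\<exists>ta\<in>{0..\<delta>}. U c \<mu>p 1 (-1) ta = 0"
  proof (rule ccontr)
    assume "\<not> ?thesis"
    then have nz: "\<And>t. t \<in> {0..\<delta>} \<Longrightarrow> U c \<mu>p 1 (-1) t \<noteq> 0" by blast
    have pos: "\<And>t. t \<in> {0..\<delta>} \<Longrightarrow> 0 < U c \<mu>p 1 (-1) t"
      by (rule pos_of_nonzero[OF SO(6)]) (use nz in \<open>auto simp: U_init2\<close>)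
    have bc: "U1 c \<mu>p 1 (-1) 0 = - U c \<mu>p 1 (-1) 0" by (simp add: U_init2)
    have df: "((\<lambda>t. Ftest c t - Ftest c \<delta>) has_real_derivative (-1 + c^2*t/2) * Ftest c t) (at t within {0..\<delta>})" for t
      by (rule Ftest_deriv)
    have cf': "continuous_on {0..\<delta>} (\<lambda>t. (-1 + c^2*t/2) * Ftest c t)"
      by (intro continuous_intros Ftest_cont) auto
    have GS: "\<mu>p * integral {0..\<delta>} (\<lambda>t. (1 - c*t) * (Ftest c t - Ftest c \<delta>)^2)
        \<le> integral {0..\<delta>} (\<lambda>t. (1 - c*t) * ((-1 + c^2*t/2) * Ftest c t)^2) - (Ftest c 0 - Ftest c \<delta>)^2"
      by (rule ground_state[OF d0 SO(5) SO(1) SO(2) SO(8) SO(3) pos bc df cf']) simp_all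
    note TF = test_function[OF c0' c1 cd d5]
    define I where "I = integral {0..\<delta>} (\<lambda>t. (1 - c*t) * (Ftest c t - Ftest c \<delta>)^2)"
    have I50: "1/50 \<le> I" using TF(2) unfolding I_def .
    have "\<mu>p * I \<le> \<mu>0 * I + A" using GS TF(1) unfolding I_def \<mu>0_def A_def by linarith
    moreover have "\<mu>p * I = \<mu>0 * I + (100*A + c^4) * I" unfolding \<mu>p_def by (simp add: algebra_simps)
    moreover have "(100*A + c^4) * (1/50) \<le> (100*A + c^4) * I" using I50 A0 c4 by (intro mult_left_mono) auto
    ultimately have "(100*A + c^4) * (1/50) \<le> A" by linarith
    moreover have "(100*A + c^4) * (1/50) = 2*A + c^4/50" by (simp add: algebra_simps)
    ultimately show False using A0 c4 by linarith
  qed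
  then obtain ta where ta: "ta \<in> {0..\<delta>}" "U c \<mu>p 1 (-1) ta = 0" by blast
  define S where "S = {lz..\<mu>p} \<times> {0..\<delta>}"
  define Z where "Z = {p \<in> S. U c (fst p) 1 (-1) (snd p) = 0}"
  define L where "L = \<bar>lz\<bar> + \<bar>\<mu>p\<bar>"
  have JC0: "continuous_on ({-L..L} \<times> {-\<delta>..\<delta>}) (\<lambda>p. U c (fst p) 1 (-1) (snd p))"
  proof (rule U_joint_cont)
    show "c \<le> 1/(2*\<delta>)" using cd d0 by (simp add: field_simps)
    show "0 < 1/(2*\<delta>)" using d0 by simp
    show "0 \<le> \<delta>" using d0 by simp
    show "\<delta> < 1/(1/(2*\<delta>))" using d0 by simp
  qed (rule c0')
  have SS: "S \<subseteq> {-L..L} \<times> {-\<delta>..\<delta>}" unfolding S_def L_def by auto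
  have JC: "continuous_on S (\<lambda>p. U c (fst p) 1 (-1) (snd p))" by (rule continuous_on_subset[OF JC0 SS])
  have cS: "compact S" unfolding S_def by (intro compact_Times compact_Icc)
  have clZ: "closed Z" unfolding Z_def by (rule continuous_closed_preimage_constant[OF JC compact_imp_closed[OF cS]])
  have ZS: "Z \<subseteq> S" unfolding Z_def by auto
  have cZ: "compact Z" using compact_Int_closed[OF cS clZ] ZS by (simp add: Int_absorb1)
  have cK: "compact (fst ` Z)" by (rule compact_continuous_image[OF _ cZ]) (intro continuous_intros)
  have pZ: "(\<mu>p, ta) \<in> Z" unfolding Z_def S_def using ta l0p by auto
  then have Kne: "fst ` Z \<noteq> {}" by blast
  obtain ls where ls: "ls \<in> fst ` Z" "\<And>y. y \<in> fst ` Z \<Longrightarrow> ls \<le> y"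
    using compact_attains_inf[OF cK Kne] by blast
  then obtain ts where pts: "(ls, ts) \<in> Z" by force
  then have ls_rng: "lz \<le> ls" "ls \<le> \<mu>p" and ts_rng: "0 \<le> ts" "ts \<le> \<delta>" and uts: "U c ls 1 (-1) ts = 0"
    unfolding Z_def S_def by auto
  have ts0: "0 < ts"
  proof -
    have "ts \<noteq> 0" using uts by (auto simp: U_init2)
    then show ?thesis using ts_rng by simp
  qed
  have lsgt: "lz < ls"
  proof (rule ccontr)
    assume "\<not> lz < ls"
    then have e: "ls = lz" using ls_rng by simp
    note SOT = series_on[OF c0' cd ts0 ts_rng(2)]
    have "-1 - c - c^2/2 - 3/2*(c^3*\<delta>^2 + c^4*\<delta>^2/4) \<le> lz"
    proof (rule lower_bound_eig[OF c0' cd ts0 ts_rng(2) SOT(1) SOT(2) SOT(4)])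
      show "U1 c lz 1 (-1) 0 = - U c lz 1 (-1) 0" by (simp add: U_init2)
      show "U c lz 1 (-1) ts = 0" using uts e by simp
      show "0 \<in> {0..ts}" using ts0 by simp
      show "U c lz 1 (-1) 0 \<noteq> 0" by (simp add: U_init2)
    qed
    then show False unfolding lz_def \<mu>0_def E1_def by simp
  qed
  have posd: "0 < U c l 1 (-1) t" if l: "lz \<le> l" "l < ls" and t: "t \<in> {0..\<delta>}" for l t
  proof (rule pos_of_nonzero[OF series_on(6)[OF c0' cd d0 order_refl]])
    show "0 < U c l 1 (-1) 0" by (simp add: U_init2)
    show "t \<in> {0..\<delta>}" by (rule t)
    fix s assume s: "s \<in> {0..\<delta>}"
    show "U c l 1 (-1) s \<noteq> 0"
    proof
      assume "U c l 1 (-1) s = 0"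
      then have "(l, s) \<in> Z" unfolding Z_def S_def using l s ls_rng by auto
      then have "ls \<le> l" using ls(2)[of l] by force
      then show False using l by simp
    qed
  qed
  have nonneg: "0 \<le> U c ls 1 (-1) t" if t: "t \<in> {0..\<delta>}" for t
  proof -
    define sq where "sq n = ls - (ls - lz) / real (n + 2)" for n
    have lim0: "(\<lambda>n. (ls - lz) / real (n + 2)) \<longlonglongrightarrow> 0"
      using LIMSEQ_ignore_initial_segment[OF lim_const_over_n[of "ls - lz"], of 2] by simp
    have lim: "sq \<longlonglongrightarrow> ls" unfolding sq_def using tendsto_diff[OF tendsto_const lim0, of ls] by simp
    have sq_rng: "lz \<le> sq n" "sq n < ls" for n
    proof -
      have p: "0 < ls - lz" using lsgt by simp
      have "(ls - lz) / real (n + 2) \<le> (ls - lz) / 1" using p by (intro divide_left_mono) auto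
      then show "lz \<le> sq n" unfolding sq_def by simp
      have "0 < (ls - lz) / real (n + 2)" using p by simp
      then show "sq n < ls" unfolding sq_def by simp
    qed
    have cl: "continuous_on {lz..\<mu>p} (\<lambda>l. U c l 1 (-1) t)"
    proof -
      have "continuous_on {lz..\<mu>p} (\<lambda>l. (\<lambda>p. U c (fst p) 1 (-1) (snd p)) (l, t))"
        by (rule continuous_on_compose2[OF JC, of _ "\<lambda>l. (l, t)"]) (use t in \<open>auto intro!: continuous_intros simp: S_def\<close>)
      then show ?thesis by simp
    qed
    have "(\<lambda>n. U c (sq n) 1 (-1) t) \<longlonglongrightarrow> U c ls 1 (-1) t"
    proof (rule continuous_on_tendsto_compose[OF cl lim])
      show "ls \<in> {lz..\<mu>p}" using ls_rng by simp
      have "sq n \<in> {lz..\<mu>p}" for n using sq_rng(1)[of n] sq_rng(2)[of n] ls_rng(2) by simp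
      then show "\<forall>\<^sub>F n in sequentially. sq n \<in> {lz..\<mu>p}" by simp
    qed
    moreover have "\<exists>N. \<forall>n\<ge>N. 0 \<le> U c (sq n) 1 (-1) t"
      using posd[OF sq_rng t] by (auto intro: less_imp_le)
    ultimately show ?thesis by (rule LIMSEQ_le_const)
  qed
  have tsd: "ts = \<delta>"
  proof (rule ccontr)
    assume "ts \<noteq> \<delta>"
    then have tslt: "ts < \<delta>" using ts_rng by simp
    have tsabs: "\<bar>ts\<bar> < 2*\<delta>" using ts_rng d0 by simp
    have d1: "U1 c ls 1 (-1) ts = 0"
    proof (rule DERIV_local_min[OF series_facts(1)[OF c0' cd d0 tsabs]])
      show "0 < min ts (\<delta> - ts)" using ts0 tslt by simp
      show "\<forall>y. \<bar>ts - y\<bar> < min ts (\<delta> - ts) \<longrightarrow> U c ls 1 (-1) ts \<le> U c ls 1 (-1) y"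
      proof (intro allI impI)
        fix y assume "\<bar>ts - y\<bar> < min ts (\<delta> - ts)"
        then have "y \<in> {0..\<delta>}" by auto
        then show "U c ls 1 (-1) ts \<le> U c ls 1 (-1) y" using nonneg uts by simp
      qed
    qed
    define W where "W t = (1 - c*t) * (U c ls 1 (-1) t * U1 c ls 0 1 t - U1 c ls 1 (-1) t * U c ls 0 1 t)" for t
    have dW: "(W has_real_derivative 0) (at t)" if t: "\<bar>t\<bar> < 2*\<delta>" for t
    proof -
      note F1 = series_facts[OF c0' cd d0 t, of ls 1 "-1"]
      note F2 = series_facts[OF c0' cd d0 t, of ls 0 1]
      have "(W has_real_derivative
          (U c ls 1 (-1) t * ((1 - c*t) * U2 c ls 0 1 t - c * U1 c ls 0 1 t + ls * (1 - c*t) * U c ls 0 1 t)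
           - U c ls 0 1 t * ((1 - c*t) * U2 c ls 1 (-1) t - c * U1 c ls 1 (-1) t + ls * (1 - c*t) * U c ls 1 (-1) t))) (at t)"
        unfolding W_def[abs_def]
        by (rule derivative_eq_intros F1(1) F1(2) F2(1) F2(2) refl)+ (simp add: algebra_simps)
      then show ?thesis using F1(3) F2(3) by simp
    qed
    have cW: "continuous_on {0..ts} W"
    proof (rule continuous_at_imp_continuous_on, intro ballI)
      fix x assume x: "x \<in> {0..ts}"
      then have "\<bar>x\<bar> < 2*\<delta>" using ts_rng d0 by auto
      then show "isCont W x" by (rule DERIV_isCont[OF dW])
    qed
    have "W ts = W 0"
      by (rule DERIV_isconst2[OF ts0 cW]) (use dW ts_rng d0 in auto)
    moreover have "W 0 = 1" unfolding W_def by (simp add: U_init2)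
    moreover have "W ts = 0" unfolding W_def using uts d1 by simp
    ultimately show False by simp
  qed
  have "EIG c \<delta> ls"
    unfolding EIG_def
  proof (intro exI conjI)
    show "\<forall>t\<in>{0..\<delta>}. (U c ls 1 (-1) has_real_derivative U1 c ls 1 (-1) t) (at t within {0..\<delta>}) \<and>
                       (U1 c ls 1 (-1) has_real_derivative U2 c ls 1 (-1) t) (at t within {0..\<delta>})"
      using SO(1) SO(2) by blast
    show "\<forall>t\<in>{0..\<delta>}. - U2 c ls 1 (-1) t + c / (1 - c * t) * U1 c ls 1 (-1) t = ls * U c ls 1 (-1) t"
      using SO(4) by blast
    show "U1 c ls 1 (-1) 0 = - U c ls 1 (-1) 0" by (simp add: U_init2)
    show "U c ls 1 (-1) \<delta> = 0" using uts tsd by simp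
    show "\<exists>t\<in>{0..\<delta>}. U c ls 1 (-1) t \<noteq> 0" using d0 by (intro bexI[of _ 0]) (auto simp: U_init2)
  qed
  moreover have "ls \<le> -1 - c - c^2/2 + 100*((Ftest c \<delta>)^2*\<delta> + c^3*\<delta>^2) + c^4"
    using ls_rng unfolding \<mu>p_def \<mu>0_def A_def by simp
  ultimately show ?thesis by blast
qed

lemma key_bound:
  fixes h \<rho> :: real
  assumes h0: "0 < h" and h1: "h < 1" and hr: "h powr \<rho> \<le> 1/3" and hd: "5 \<le> h powr (\<rho> - 1/2)"
  shows "\<bar>lambda1_H h \<rho> - (-1 - sqrt h - h / 2)\<bar> \<le>
     3/2*(sqrt h^3*(h powr (\<rho> - 1/2))^2 + sqrt h^4*(h powr (\<rho> - 1/2))^2/4)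
     + 100*(3*exp(-2*h powr (\<rho> - 1/2))*h powr (\<rho> - 1/2) + sqrt h^3*(h powr (\<rho> - 1/2))^2) + sqrt h^4"
proof -
  define c where "c = sqrt h"
  define \<delta> where "\<delta> = h powr (\<rho> - 1/2)"
  have c0: "0 < c" unfolding c_def using h0 by simp
  have c1: "c \<le> 1" unfolding c_def using h1 by simp
  have cdeq: "c * \<delta> = h powr \<rho>"
  proof -
    have "c = h powr (1/2)" unfolding c_def using h0 by (simp add: powr_half_sqrt)
    then have "c * \<delta> = h powr (1/2 + (\<rho> - 1/2))" unfolding \<delta>_def by (simp add: powr_add[symmetric])
    then show ?thesis by simp
  qed
  have cd: "c * \<delta> \<le> 1/3" using cdeq hr by simp
  have d5: "5 \<le> \<delta>" unfolding \<delta>_def by (rule hd)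
  have d0: "0 < \<delta>" using d5 by simp
  have c2: "c^2 = h" unfolding c_def using h0 by simp
  define S where "S = {lam. is_eigenvalue_H h \<rho> lam}"
  have Seq: "S = {lam. EIG c \<delta> lam}"
    unfolding S_def is_eigenvalue_H_def EIG_def Let_def delta_h_def c_def \<delta>_def ..
  define \<mu>0 where "\<mu>0 = -1 - c - c^2/2"
  define E1 where "E1 = 3/2*(c^3*\<delta>^2 + c^4*\<delta>^2/4)"
  define B where "B = 100*((Ftest c \<delta>)^2*\<delta> + c^3*\<delta>^2) + c^4"
  obtain ls where ls: "EIG c \<delta> ls" "ls \<le> \<mu>0 + B"
    using upper_exists[OF c0 c1 cd d5] unfolding \<mu>0_def B_def by (auto simp: algebra_simps)
  have low: "\<mu>0 - E1 \<le> lam" if "lam \<in> S" for lam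
  proof -
    have "EIG c \<delta> lam" using that unfolding Seq by simp
    from EIG_lower[OF less_imp_le[OF c0] cd d0 this]
    show ?thesis unfolding \<mu>0_def E1_def by linarith
  qed
  have lsS: "ls \<in> S" unfolding Seq using ls(1) by simp
  have bdd: "bdd_below S" by (rule bdd_belowI[of _ "\<mu>0 - E1"]) (rule low)
  have i1: "Inf S \<le> ls" by (rule cInf_lower[OF lsS bdd])
  have i2: "\<mu>0 - E1 \<le> Inf S" by (rule cInf_greatest) (use lsS low in auto)
  have E10: "0 \<le> E1" unfolding E1_def using c0 by simp
  have B0: "0 \<le> B" unfolding B_def using c0 d0 by simp
  have lam_eq: "lambda1_H h \<rho> = Inf S" unfolding lambda1_H_def S_def ..
  have mu_eq: "-1 - sqrt h - h / 2 = \<mu>0" unfolding \<mu>0_def c2 by (simp add: c_def)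
  have main: "\<bar>lambda1_H h \<rho> - (-1 - sqrt h - h / 2)\<bar> \<le> E1 + B"
    unfolding lam_eq mu_eq using i1 i2 ls(2) E10 B0 by (simp add: abs_le_iff)
  have Fb: "(Ftest c \<delta>)^2 \<le> 3*exp(-2*\<delta>)"
  proof -
    have "(c*\<delta>)^2 \<le> (1/3)^2" using cd c0 d0 by (intro power_mono) auto
    then have "c^2*\<delta>^2 \<le> 1/9" by (simp add: power_mult_distrib power_divide)
    then have cc: "c^2*\<delta>^2 \<le> 1" by linarith
    have "(Ftest c \<delta>)^2 = exp ((-\<delta> + c^2*\<delta>^2/4) + (-\<delta> + c^2*\<delta>^2/4))"
      unfolding Ftest_def by (simp only: power2_eq_square exp_add[symmetric])
    also have "\<dots> \<le> exp (1 + (-2*\<delta>))" using cc by (simp add: mult.commute)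
    also have "\<dots> = exp 1 * exp (-2*\<delta>)" by (simp only: exp_add[symmetric])
    also have "\<dots> \<le> 3 * exp (-2*\<delta>)" using exp_le by (intro mult_right_mono) auto
    finally show ?thesis .
  qed
  have "B \<le> 100*(3*exp(-2*\<delta>)*\<delta> + c^3*\<delta>^2) + c^4"
    unfolding B_def using Fb d0 by (simp add: mult_right_mono)
  with main show ?thesis unfolding E1_def c_def[symmetric] \<delta>_def[symmetric] by linarith
qed

theorem lemma2p5:
  fixes \<rho> :: real
  assumes "1/4 < \<rho>" and "\<rho> < 1/2"
  shows "(\<lambda>h. lambda1_H h \<rho> - (-1 - sqrt h - h / 2)) \<in> o[at_right 0](\<lambda>h. h)"
proof -
  define R where "R h = 3/2*(sqrt h^3*(h powr (\<rho> - 1/2))^2 + sqrt h^4*(h powr (\<rho> - 1/2))^2/4)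
     + 100*(3*exp(-2*h powr (\<rho> - 1/2))*h powr (\<rho> - 1/2) + sqrt h^3*(h powr (\<rho> - 1/2))^2) + sqrt h^4" for h :: real
  have limR: "((\<lambda>h. R h / h) \<longlongrightarrow> 0) (at_right 0)"
    unfolding R_def using assms by real_asymp
  have ev1: "eventually (\<lambda>h::real. h powr \<rho> \<le> 1/3) (at_right 0)"
    using assms by real_asymp
  have ev2: "eventually (\<lambda>h::real. 5 \<le> h powr (\<rho> - 1/2)) (at_right 0)"
    using assms by real_asymp
  have ev3: "eventually (\<lambda>h::real. 0 < h) (at_right 0)" by real_asymp
  have ev4: "eventually (\<lambda>h::real. h < 1) (at_right 0)" by real_asymp
  have evB: "eventually (\<lambda>h. norm ((lambda1_H h \<rho> - (-1 - sqrt h - h / 2)) / h) \<le> norm (R h / h) * 1) (at_right 0)"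
    using ev1 ev2 ev3 ev4
  proof eventually_elim
    case (elim h)
    have kb: "\<bar>lambda1_H h \<rho> - (-1 - sqrt h - h / 2)\<bar> \<le> R h"
      unfolding R_def by (rule key_bound) (use elim in auto)
    have "\<bar>lambda1_H h \<rho> - (-1 - sqrt h - h / 2)\<bar> / h \<le> R h / h"
      using kb elim(3) by (simp add: divide_right_mono)
    also have "\<dots> \<le> \<bar>R h / h\<bar>" by (rule abs_ge_self)
    finally show ?case using elim(3) by (simp add: abs_divide)
  qed
  have "((\<lambda>h. (lambda1_H h \<rho> - (-1 - sqrt h - h / 2)) / h) \<longlongrightarrow> 0) (at_right 0)"
    by (rule tendsto_0_le[OF limR evB])
  moreover have "eventually (\<lambda>h::real. h \<noteq> 0) (at_right 0)" using ev3 by eventually_elim simp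
  ultimately show ?thesis by (rule smalloI_tendsto)
qed

end
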